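(* Let $A$ be a random matrix with law $\mu$, where $\mu$ is as in the context and satisfies Conditions (C1), (C2), $\int\log_+\mathcal{N}(a)\,d\mu(a)<\infty$, $1\in I_\mu$, and $r(\mathbb{E}A)>e^\gamma$. Then for every $R>0$ there exist an integer $K>0$ and $a_1,\dots,a_K\in\mathrm{supp}(\mu)$ such that $g:=a_1\cdots a_K>0$ and $r(g)\ge R\,(r(\mathbb{E}A))^K$.
   Context: Notation: $G$ is the set of $d\times d$ nonnegative matrices; $|x|=\sum_i|x_i|$; $\|a\|$ operator norm, $r(a)$ spectral radius; $a>0$ means all entries strictly positive; $\mathbb{S}_+^{d-1}=\{x\in\mathbb{R}_+^d:|x|=1\}$; $\iota(a)=\inf_{x\in\mathbb{S}_+^{d-1}}|ax|$; $\mathcal{N}(a)=\max\{\|a\|,\iota(a)^{-1}\}$; $\log_+y=\max(\log y,0)$. Setting: random $A_i\in G$, $N=\#\{i:A_i\ne0\}<\infty$ a.s., $A_i\ne0$ iff $i\le N$; $\mu$: probability on $G$ with $\int f\,d\mu=\mathbb{E}[\sum_{i\le N}f(A_i)]/\mathbb{E}[N]$; $\Gamma$: multiplicative semigroup (with identity) generated by $\mathrm{supp}(\mu)$. $(M_i)$ i.i.d. of law $\mu$, $G_n=M_1\cdots M_n$, $\gamma=\lim_n\frac1n\mathbb{E}[\log\|G_n\|]$; $I_\mu=\{s\ge0:\int\|a\|^sd\mu<\infty\}$. (C1) $N\ge1$ a.s., $\mathbb{E}[N]\in(1,\infty)$, $A_i\in G$, $A_i\ne0$ iff $i\le N$. (C2)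 Every $a\in\Gamma$ has a strictly positive entry in each row and column; $\Gamma$ contains a strictly positive matrix. *)

theory Defs
  imports "HOL-Probability.Probability"
begin

type_synonym 'd mat = "real ^ 'd ^ 'd"

definition nonneg_mat :: "('d::finite) mat \<Rightarrow> bool" where
  "nonneg_mat a \<longleftrightarrow> (\<forall>i j. a $ i $ j \<ge> 0)"

definition pos_mat :: "('d::finite) mat \<Rightarrow> bool" where
  "pos_mat a \<longleftrightarrow> (\<forall>i j. a $ i $ j > 0)"

definition l1 :: "real ^ ('d::finite) \<Rightarrow> real" where
  "l1 x = (\<Sum>i\<in>UNIV. \<bar>x $ i\<bar>)"

definition opnorm1 :: "('d::finite) mat \<Rightarrow> real" where
  "opnorm1 a = Sup {l1 (a *v x) | x. l1 x = 1}"

definition iota :: "('d::finite) mat \<Rightarrow> real" where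
  "iota a = Inf {l1 (a *v x) | x. (\<forall>i. x $ i \<ge> 0) \<and> l1 x = 1}"

text \<open>log_+ N(a), with N(a) = max(||a||, iota(a)^-1), and iota(a)^-1 = infinity when iota(a) = 0.\<close>
definition logplus_N :: "('d::finite) mat \<Rightarrow> ennreal" where
  "logplus_N a = (if iota a = 0 then \<infinity>
      else ennreal (max 0 (ln (max (opnorm1 a) (inverse (iota a))))))"

definition is_eigenvalue :: "('d::finite) mat \<Rightarrow> complex \<Rightarrow> bool" where
  "is_eigenvalue a l \<longleftrightarrow> (\<exists>v :: complex ^ 'd. v \<noteq> 0 \<and>
      (\<chi> i. \<Sum>j\<in>UNIV. complex_of_real (a $ i $ j) * v $ j) = l *s v)"

definition spec_rad :: "('d::finite) mat \<Rightarrow> real" where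
  "spec_rad a = Sup {cmod l | l. is_eigenvalue a l}"

definition mprod :: "('d::finite) mat list \<Rightarrow> 'd mat" where
  "mprod as = foldr (**) as (mat 1)"

definition msupp :: "('d::finite) mat measure \<Rightarrow> 'd mat set" where
  "msupp \<mu> = {a. \<forall>e>0. emeasure \<mu> (ball a e) > 0}"

definition gen_semigroup :: "('d::finite) mat set \<Rightarrow> 'd mat set" where
  "gen_semigroup S = {mprod as | as. set as \<subseteq> S}"

definition cond_C2 :: "('d::finite) mat measure \<Rightarrow> bool" where
  "cond_C2 \<mu> \<longleftrightarrow>
     (\<forall>a\<in>gen_semigroup (msupp \<mu>). (\<forall>i. \<exists>j. a $ i $ j > 0) \<and> (\<forall>j. \<exists>i. a $ i $ j > 0))
   \<and> (\<exists>a\<in>gen_semigroup (msupp \<mu>). pos_mat a)"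

text \<open>Lyapunov exponent: gamma = lim (1/n) E log ||M_1 ... M_n|| with M_i iid of law mu,
  expressed via the n-fold product measure.\<close>
definition lyap :: "('d::finite) mat measure \<Rightarrow> real" where
  "lyap \<mu> = lim (\<lambda>n. (\<integral>m. ln (opnorm1 (mprod (map m [0..<n]))) \<partial>(PiM {0..<n} (\<lambda>_. \<mu>))) / real n)"

end

theory Submission
  imports Defs "HOL-Computational_Algebra.Fundamental_Theorem_Algebra"
begin

lemma mprod_Nil[simp]: "mprod [] = mat 1" by (simp add: mprod_def)
lemma mprod_Cons[simp]: "mprod (x # xs) = x ** mprod xs" by (simp add: mprod_def)
lemma mprod_append: "mprod (xs @ ys) = mprod xs ** mprod ys"
  by (induction xs) (simp_all add: matrix_mul_assoc)
lemma mprod_snoc: "mprod (xs @ [x]) = mprod xs ** x"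
  by (simp add: mprod_append)

definition colsum :: "('d::finite) mat \<Rightarrow> 'd \<Rightarrow> real" where
  "colsum a j = (\<Sum>i\<in>UNIV. \<bar>a $ i $ j\<bar>)"
definition cs :: "('d::finite) mat \<Rightarrow> real" where
  "cs a = Max (range (colsum a))"
definition sm :: "real ^ ('d::finite) \<Rightarrow> real" where
  "sm x = (\<Sum>i\<in>UNIV. x $ i)"

lemma colsum_le_cs: "colsum a j \<le> cs a"
  unfolding cs_def by (rule Max_ge) auto
lemma cs_attained: "\<exists>j. cs a = colsum a j"
proof -
  have "cs a \<in> range (colsum a)" unfolding cs_def by (rule Max_in) auto
  then show ?thesis by auto
qed
lemma colsum_nonneg: "colsum a j \<ge> 0" unfolding colsum_def by (simp add: sum_nonneg)
lemma cs_nonneg: "cs a \<ge> 0" using colsum_le_cs[of a] colsum_nonneg[of a] by (meson order_trans)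

lemma l1_nonneg: "l1 x \<ge> 0" unfolding l1_def by (simp add: sum_nonneg)

lemma l1_mv_le: "l1 (a *v x) \<le> cs a * l1 x"
proof -
  have "l1 (a *v x) = (\<Sum>i\<in>UNIV. \<bar>\<Sum>j\<in>UNIV. a$i$j * x$j\<bar>)"
    by (simp add: l1_def matrix_vector_mult_def)
  also have "\<dots> \<le> (\<Sum>i\<in>UNIV. \<Sum>j\<in>UNIV. \<bar>a$i$j\<bar> * \<bar>x$j\<bar>)"
    by (intro sum_mono) (metis (no_types, lifting) abs_mult sum.cong sum_abs)
  also have "\<dots> = (\<Sum>j\<in>UNIV. colsum a j * \<bar>x$j\<bar>)"
    by (subst sum.swap) (simp add: colsum_def sum_distrib_right)
  also have "\<dots> \<le> (\<Sum>j\<in>UNIV. cs a * \<bar>x$j\<bar>)"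
    by (intro sum_mono mult_right_mono colsum_le_cs) auto
  also have "\<dots> = cs a * l1 x" by (simp add: l1_def sum_distrib_left)
  finally show ?thesis .
qed

lemma l1_axis: "l1 (a *v axis j 1) = colsum a j"
  by (simp add: l1_def colsum_def matrix_vector_mult_basis column_def)

lemma l1_axis1: "l1 (axis j (1::real)) = 1"
  by (simp add: l1_def axis_def)

lemma opnorm1_eq: "opnorm1 a = cs a"
proof -
  obtain j where j: "cs a = colsum a j" using cs_attained by blast
  show ?thesis unfolding opnorm1_def
  proof (rule cSup_eq_maximum)
    show "cs a \<in> {l1 (a *v x) |x. l1 x = 1}"
      using j l1_axis[of a j] l1_axis1[of j] by force
    show "y \<le> cs a" if "y \<in> {l1 (a *v x) |x. l1 x = 1}" for y
    proof -
      from that obtain x where "y = l1 (a *v x)" "l1 x = 1" by blast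
      then show ?thesis using l1_mv_le[of a x] by simp
    qed
  qed
qed

lemma cs_mult: "cs (a ** b) \<le> cs a * cs b"
proof -
  obtain j where j: "cs (a ** b) = colsum (a ** b) j" using cs_attained by blast
  have "cs (a ** b) = l1 (a *v (b *v axis j 1))"
    using j l1_axis[of "a ** b" j] by (simp add: matrix_vector_mul_assoc)
  also have "\<dots> \<le> cs a * l1 (b *v axis j 1)" by (rule l1_mv_le)
  also have "\<dots> \<le> cs a * cs b"
    using l1_axis[of b j] colsum_le_cs[of b j] cs_nonneg[of a] by (simp add: mult_left_mono)
  finally show ?thesis .
qed

lemma norm_le_cs: "norm (a :: ('d::finite) mat) \<le> real CARD('d) * cs a"
proof -
  have "norm a \<le> (\<Sum>i\<in>UNIV. norm (a $ i))" unfolding norm_vec_def by (rule L2_set_le_sum) auto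
  also have "\<dots> \<le> (\<Sum>i\<in>UNIV. \<Sum>j\<in>UNIV. \<bar>a$i$j\<bar>)" by (intro sum_mono norm_le_l1_cart)
  also have "\<dots> = (\<Sum>j\<in>UNIV. colsum a j)" by (subst sum.swap) (simp add: colsum_def)
  also have "\<dots> \<le> (\<Sum>j\<in>(UNIV::'d set). cs a)" by (intro sum_mono colsum_le_cs)
  finally show ?thesis by simp
qed

lemma cs_id: "cs (mat 1 :: ('d::finite) mat) = 1"
proof -
  have "colsum (mat 1 :: 'd mat) j = 1" for j
    unfolding colsum_def mat_def by (simp add: sum.delta)
  then show ?thesis unfolding cs_def by simp
qed

lemma nonneg_mult: "nonneg_mat a \<Longrightarrow> nonneg_mat b \<Longrightarrow> nonneg_mat (a ** b)"
  unfolding nonneg_mat_def matrix_matrix_mult_def by (auto intro!: sum_nonneg)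

lemma nonneg_id: "nonneg_mat (mat 1)"
  unfolding nonneg_mat_def mat_def by auto

lemma nonneg_mprod: "set as \<subseteq> Collect nonneg_mat \<Longrightarrow> nonneg_mat (mprod as)"
  by (induction as) (auto intro: nonneg_mult nonneg_id)

lemma nonneg_mv: "nonneg_mat a \<Longrightarrow> (\<forall>i. x$i \<ge> 0) \<Longrightarrow> (a *v x) $ i \<ge> 0"
  unfolding nonneg_mat_def matrix_vector_mult_def by (auto intro!: sum_nonneg)

lemma mv_mono: "nonneg_mat a \<Longrightarrow> (\<forall>i. x$i \<le> y$i) \<Longrightarrow> (a *v x) $ i \<le> (a *v y) $ i"
  unfolding nonneg_mat_def matrix_vector_mult_def by (auto intro!: sum_mono mult_left_mono)

lemma l1_sm: "(\<forall>i. x$i \<ge> 0) \<Longrightarrow> l1 x = sm x"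
  unfolding l1_def sm_def by simp

lemma sm_le_l1: "sm x \<le> l1 x"
  unfolding l1_def sm_def by (intro sum_mono) auto

lemma abs_sm_le_l1: "\<bar>sm x\<bar> \<le> l1 x"
  unfolding l1_def sm_def by (rule sum_abs)

section \<open>Eigenvalues and spectral radius\<close>

definition cmat :: "('d::finite) mat \<Rightarrow> complex^'d^'d" where
  "cmat B = (\<chi> i j. complex_of_real (B $ i $ j))"

definition shmat :: "('d::finite) mat \<Rightarrow> complex \<Rightarrow> complex^'d^'d" where
  "shmat B l = (\<chi> i j. cmat B $ i $ j - (if i = j then l else 0))"

lemma shmat_mv: "shmat B l *v v = (\<chi> i. \<Sum>j\<in>UNIV. complex_of_real (B $ i $ j) * v $ j) - l *s v"
proof -
  have "(\<Sum>j\<in>UNIV. (complex_of_real (B $ i $ j) - (if i = j then l else 0)) * v $ j)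
      = (\<Sum>j\<in>UNIV. complex_of_real (B $ i $ j) * v $ j) - l * v $ i" for i
  proof -
    have "(\<Sum>j\<in>UNIV. (complex_of_real (B $ i $ j) - (if i = j then l else 0)) * v $ j)
      = (\<Sum>j\<in>UNIV. complex_of_real (B $ i $ j) * v $ j - (if i = j then l * v $ j else 0))"
      by (intro sum.cong) (auto simp: algebra_simps)
    also have "\<dots> = (\<Sum>j\<in>UNIV. complex_of_real (B $ i $ j) * v $ j) - l * v $ i"
      by (simp add: sum_subtractf)
    finally show ?thesis .
  qed
  then show ?thesis
    by (simp add: vec_eq_iff shmat_def cmat_def matrix_vector_mult_def)
qed

lemma eig_iff_det: "is_eigenvalue B l \<longleftrightarrow> det (shmat B l) = 0"
proof -
  let ?f = "(*v) (shmat B l)"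
  have lin: "Vector_Spaces.linear (*s) (*s) ?f" by simp
  have "det (shmat B l) \<noteq> 0 \<longleftrightarrow> inj ?f"
    using det_nz_iff_inj_gen[OF lin] by simp
  also have "inj ?f \<longleftrightarrow> (\<forall>v. ?f v = 0 \<longrightarrow> v = 0)"
  proof
    assume "inj ?f" then show "\<forall>v. ?f v = 0 \<longrightarrow> v = 0"
      by (metis injD matrix_vector_mult_0_right)
  next
    assume h: "\<forall>v. ?f v = 0 \<longrightarrow> v = 0"
    show "inj ?f"
    proof (rule injI)
      fix x y assume "?f x = ?f y"
      then have "?f (x - y) = 0" by (simp add: matrix_vector_mult_diff_distrib)
      then show "x = y" using h by auto
    qed
  qed
  finally have "det (shmat B l) = 0 \<longleftrightarrow> (\<exists>v. v \<noteq> 0 \<and> ?f v = 0)" by blast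
  then show ?thesis unfolding is_eigenvalue_def shmat_mv by simp
qed

definition Qp :: "('d::finite) mat \<Rightarrow> 'd \<Rightarrow> 'd \<Rightarrow> complex poly" where
  "Qp B i j = [: cmat B $ i $ j :] - (if i = j then [:0, 1:] else 0)"

definition cp :: "('d::finite) mat \<Rightarrow> complex poly" where
  "cp B = (\<Sum>p\<in>{p. p permutes (UNIV::'d set)}. smult (of_int (sign p)) (\<Prod>i\<in>UNIV. Qp B i (p i)))"

lemma poly_Qp: "poly (Qp B i j) l = shmat B l $ i $ j"
  by (simp add: Qp_def shmat_def)

lemma poly_cp: "poly (cp B) l = det (shmat B l)"
  unfolding cp_def det_def poly_sum poly_prod
  by (simp add: poly_prod poly_Qp)

lemma degree_Qp: "degree (Qp B i j) \<le> (if i = j then 1 else 0)"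
  by (auto simp: Qp_def intro: order.trans[OF degree_diff_le])

lemma coeff_cp_nonid:
  assumes p: "p permutes (UNIV::'d::finite set)" and ne: "p \<noteq> id"
  shows "coeff (\<Prod>i\<in>UNIV. Qp B i (p i)) CARD('d) = 0"
proof -
  obtain k where k: "p k \<noteq> k" using ne by (metis eq_id_iff)
  have "degree (\<Prod>i\<in>UNIV. Qp B i (p i)) \<le> (\<Sum>i\<in>UNIV. degree (Qp B i (p i)))"
    using degree_prod_sum_le[of UNIV "\<lambda>i. Qp B i (p i)"] by (simp add: o_def)
  also have "\<dots> = degree (Qp B k (p k)) + (\<Sum>i\<in>UNIV - {k}. degree (Qp B i (p i)))"
    by (simp add: sum.remove)
  also have "\<dots> \<le> 0 + (\<Sum>i\<in>UNIV - {k}. 1)"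
    using degree_Qp[of B k "p k"] k
    by (intro add_mono sum_mono) (auto intro: order.trans[OF degree_Qp])
  also have "\<dots> < CARD('d)"
    by (simp add: card_Diff_singleton)
  finally show ?thesis by (intro coeff_eq_0) simp
qed

lemma coeff_cp_id:
  fixes B :: "('d::finite) mat"
  shows "coeff (\<Prod>i\<in>UNIV. Qp B i i) CARD('d::finite) = (-1) ^ CARD('d)"
proof -
  have Q: "Qp B i i = [: cmat B $ i $ i, -1 :]" for i
    by (simp add: Qp_def)
  have deg: "degree (\<Prod>i\<in>(UNIV::'d set). Qp B i i) = CARD('d)"
    by (subst degree_prod_eq_sum_degree) (auto simp: Q)
  have "lead_coeff (\<Prod>i\<in>(UNIV::'d set). Qp B i i) = (-1) ^ CARD('d)"
    by (simp add: lead_coeff_prod Q)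
  then show ?thesis using deg by simp
qed

lemma coeff_cp:
  fixes B :: "('d::finite) mat"
  shows "coeff (cp B) CARD('d) = (-1) ^ CARD('d)"
proof -
  let ?P = "{p. p permutes (UNIV::'d set)}"
  have idP: "id \<in> ?P" by (simp add: permutes_id)
  have fin: "finite ?P" by (simp add: finite_permutations)
  have "coeff (cp B) CARD('d) = (\<Sum>p\<in>?P. of_int (sign p) * coeff (\<Prod>i\<in>UNIV. Qp B i (p i)) CARD('d))"
    by (simp add: cp_def coeff_sum)
  also have "\<dots> = of_int (sign (id::'d\<Rightarrow>'d)) * coeff (\<Prod>i\<in>UNIV. Qp B i (id i)) CARD('d)
       + (\<Sum>p\<in>?P - {id}. of_int (sign p) * coeff (\<Prod>i\<in>UNIV. Qp B i (p i)) CARD('d))"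
    by (rule sum.remove[OF fin idP])
  also have "(\<Sum>p\<in>?P - {id}. of_int (sign p) * coeff (\<Prod>i\<in>UNIV. Qp B i (p i)) CARD('d)) = 0"
    by (intro sum.neutral) (auto simp: coeff_cp_nonid)
  finally show ?thesis by (simp add: sign_id coeff_cp_id)
qed

lemma cp_nz: "cp B \<noteq> 0" and cp_deg: "degree (cp (B::('d::finite) mat)) \<ge> CARD('d)"
proof -
  have "coeff (cp B) CARD('d) \<noteq> 0" by (simp add: coeff_cp)
  then show "cp B \<noteq> 0" "degree (cp B) \<ge> CARD('d)" by (auto intro: le_degree)
qed

lemma eig_set: "{l. is_eigenvalue B l} = {l. poly (cp B) l = 0}"
  by (simp add: eig_iff_det poly_cp)

lemma eig_finite: "finite {l. is_eigenvalue B l}"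
  by (simp add: eig_set poly_roots_finite cp_nz)

lemma eig_nonempty: "\<exists>l. is_eigenvalue (B::('d::finite) mat) l"
proof -
  have "degree (cp B) \<noteq> 0" using cp_deg[of B] by (metis finite_UNIV_card_ge_0 finite le_zero_eq not_gr0)
  then have "\<not> constant (poly (cp B))" by (simp add: constant_degree)
  then obtain z where "poly (cp B) z = 0" using fundamental_theorem_of_algebra by blast
  then show ?thesis using eig_set[of B] by blast
qed

lemma spec_rad_ge: "is_eigenvalue B l \<Longrightarrow> cmod l \<le> spec_rad B"
  unfolding spec_rad_def
  by (rule cSup_upper) (auto simp: setcompr_eq_image intro!: bdd_above_finite finite_imageI eig_finite)

lemma spec_rad_attained: "\<exists>l. is_eigenvalue B l \<and> cmod l = spec_rad B"
proof -
  let ?E = "cmod ` {l. is_eigenvalue B l}"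
  have "finite ?E" "?E \<noteq> {}" using eig_finite eig_nonempty by auto
  then have "Sup ?E \<in> ?E" by (simp add: cSup_eq_Max)
  moreover have "Sup ?E = spec_rad B" unfolding spec_rad_def by (simp add: setcompr_eq_image)
  ultimately show ?thesis by auto
qed

lemma nonneg_eigvec:
  fixes B :: "('d::finite) mat"
  assumes B: "nonneg_mat B"
  shows "\<exists>z. (\<forall>i. z$i \<ge> 0) \<and> z \<noteq> 0 \<and> (\<forall>i. (B *v z)$i \<ge> spec_rad B * z$i)"
proof -
  obtain l where l: "is_eigenvalue B l" "cmod l = spec_rad B" using spec_rad_attained by blast
  then obtain v :: "complex^'d" where v: "v \<noteq> 0"
    "(\<chi> i. \<Sum>j\<in>UNIV. complex_of_real (B $ i $ j) * v $ j) = l *s v"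
    unfolding is_eigenvalue_def by blast
  define z where "z = (\<chi> i. cmod (v $ i))"
  have "z \<noteq> 0"
  proof
    assume "z = 0"
    then have "v $ i = 0" for i by (simp add: z_def vec_eq_iff)
    then show False using v(1) by (simp add: vec_eq_iff)
  qed
  moreover have "(B *v z)$i \<ge> spec_rad B * z$i" for i
  proof -
    have "spec_rad B * z$i = cmod ((l *s v) $ i)" using l(2) by (simp add: z_def norm_mult)
    also have "\<dots> = cmod (\<Sum>j\<in>UNIV. complex_of_real (B $ i $ j) * v $ j)"
      using arg_cong[OF v(2), of "\<lambda>w. w $ i"] by simp
    also have "\<dots> \<le> (\<Sum>j\<in>UNIV. cmod (complex_of_real (B $ i $ j) * v $ j))" by (rule norm_sum)
    also have "\<dots> = (B *v z)$i"
      using B by (simp add: matrix_vector_mult_def z_def norm_mult nonneg_mat_def)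
    finally show ?thesis .
  qed
  moreover have "\<forall>i. z$i \<ge> 0" by (simp add: z_def)
  ultimately show ?thesis by blast
qed

definition smpx :: "(real^('d::finite)) set" where
  "smpx = {x. (\<forall>i. 0 \<le> x$i) \<and> sm x = 1}"

lemma smpx_compact: "compact (smpx :: (real^('d::finite)) set)"
unfolding compact_eq_bounded_closed proof (rule conjI)
  have "norm x \<le> 1" if "x \<in> smpx" for x :: "real^'d"
    using that norm_le_l1_cart[of x] by (simp add: smpx_def sm_def)
  then show "bounded (smpx :: (real^'d) set)" by (auto simp: bounded_iff)
  have "smpx = (\<Inter>i. {x::real^'d. 0 \<le> x$i}) \<inter> {x. sm x = 1}"
    by (auto simp: smpx_def)
  moreover have "closed {x::real^'d. sm x = 1}"
    unfolding sm_def by (intro closed_Collect_eq continuous_intros)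
  moreover have "closed (\<Inter>i. {x::real^'d. 0 \<le> x$i})"
    by (intro closed_INT ballI closed_Collect_le continuous_intros)
  ultimately show "closed (smpx :: (real^'d) set)"
    by (metis closed_Int)
qed

lemma sm_add: "sm (x + y) = sm x + sm y" by (simp add: sm_def sum.distrib)
lemma sm_scale: "sm (c *\<^sub>R x) = c * sm x" by (simp add: sm_def sum_distrib_left)

lemma smpx_convex: "convex (smpx :: (real^('d::finite)) set)"
  unfolding convex_def smpx_def by (auto simp: sm_add sm_scale)

lemma spec_rad_lower:
  fixes B :: "('d::finite) mat"
  assumes c: "c > 0" and Bc: "\<And>i j. B$i$j \<ge> c"
  shows "spec_rad B \<ge> c"
proof -
  let ?S = "smpx :: (real^'d) set"
  have Bx: "(B *v x)$i \<ge> c" if "x \<in> ?S" for x i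
  proof -
    have "c = (\<Sum>j\<in>UNIV. c * x$j)" using that by (simp add: smpx_def sm_def sum_distrib_left[symmetric])
    also have "\<dots> \<le> (\<Sum>j\<in>UNIV. B$i$j * x$j)"
      using that Bc by (intro sum_mono mult_right_mono) (auto simp: smpx_def)
    finally show ?thesis by (simp add: matrix_vector_mult_def)
  qed
  have smB: "sm (B *v x) \<ge> c" if "x \<in> ?S" for x
  proof -
    obtain i0 :: 'd where True by blast
    have "c \<le> (B *v x)$i0" using Bx[OF that] .
    also have "\<dots> \<le> sm (B *v x)" unfolding sm_def
      by (rule member_le_sum) (use Bx[OF that] c in \<open>auto intro: order.trans[OF less_imp_le]\<close>)
    finally show ?thesis .
  qed
  define f where "f x = inverse (sm (B *v x)) *\<^sub>R (B *v x)" for x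
  have nz: "\<forall>x\<in>?S. sum (($) (B *v x)) UNIV \<noteq> 0"
    using smB c unfolding sm_def by force
  have cont: "continuous_on ?S f"
    unfolding f_def sm_def
    by (intro continuous_intros) (use nz in auto)
  have fS: "f \<in> ?S \<rightarrow> ?S"
  proof
    fix x assume x: "x \<in> ?S"
    have pos: "sm (B *v x) > 0" using smB[OF x] c by simp
    show "f x \<in> ?S" unfolding smpx_def f_def
      using pos Bx[OF x] c by (auto simp: sm_scale intro!: mult_nonneg_nonneg intro: order.trans[OF less_imp_le])
  qed
  have ne: "?S \<noteq> {}"
  proof -
    obtain i0 :: 'd where True by blast
    have "axis i0 1 \<in> ?S" by (simp add: smpx_def sm_def axis_def)
    then show ?thesis by blast
  qed
  obtain x where x: "x \<in> ?S" "f x = x"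
    using brouwer[OF smpx_compact smpx_convex ne cont fS] by blast
  define lam where "lam = sm (B *v x)"
  have lam: "lam \<ge> c" using smB[OF x(1)] by (simp add: lam_def)
  have eq: "B *v x = lam *\<^sub>R x"
  proof -
    have "B *v x = lam *\<^sub>R f x" using lam c by (simp add: f_def lam_def)
    then show ?thesis using x(2) by simp
  qed
  define v where "v = (\<chi> i. complex_of_real (x $ i))"
  have "v \<noteq> 0"
  proof
    assume "v = 0"
    then have "x$i = 0" for i by (simp add: v_def vec_eq_iff)
    then show False using x(1) by (simp add: smpx_def sm_def)
  qed
  moreover have "(\<chi> i. \<Sum>j\<in>UNIV. complex_of_real (B $ i $ j) * v $ j) = complex_of_real lam *s v"
  proof -
    have "(\<Sum>j\<in>UNIV. complex_of_real (B $ i $ j) * v $ j) = complex_of_real ((B *v x) $ i)" for i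
      by (simp add: v_def matrix_vector_mult_def)
    then show ?thesis using eq by (simp add: vec_eq_iff v_def)
  qed
  ultimately have "is_eigenvalue B (complex_of_real lam)" unfolding is_eigenvalue_def by blast
  then have "cmod (complex_of_real lam) \<le> spec_rad B" by (rule spec_rad_ge)
  then show ?thesis using lam c by simp
qed

lemma cs_diff_le: "cs a \<le> cs b + cs (a - b)"
proof -
  obtain j where j: "cs a = colsum a j" using cs_attained by blast
  have "colsum a j \<le> colsum b j + colsum (a - b) j"
    unfolding colsum_def sum.distrib[symmetric]
    by (intro sum_mono) (metis abs_triangle_ineq add.commute diff_add_cancel vector_minus_component)
  then show ?thesis using j colsum_le_cs[of b j] colsum_le_cs[of "a - b" j] by linarith
qed

lemma cs_le_norm: "cs (a :: ('d::finite) mat) \<le> real CARD('d) * norm a"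
proof -
  obtain j where j: "cs a = colsum a j" using cs_attained by blast
  have "colsum a j \<le> (\<Sum>i\<in>(UNIV::'d set). norm a)" unfolding colsum_def
  proof (intro sum_mono)
    fix i
    have "\<bar>a $ i $ j\<bar> \<le> norm (a $ i)" by (rule component_le_norm_cart)
    also have "\<dots> \<le> norm a" by (rule Finite_Cartesian_Product.norm_nth_le)
    finally show "\<bar>a $ i $ j\<bar> \<le> norm a" .
  qed
  then show ?thesis using j by simp
qed

lemma cs_lipschitz: "(real CARD('d))-lipschitz_on UNIV (cs :: ('d::finite) mat \<Rightarrow> real)"
proof (rule lipschitz_onI)
  fix x y :: "'d mat"
  have "cs x - cs y \<le> real CARD('d) * norm (x - y)" using cs_diff_le[of x y] cs_le_norm[of "x - y"] by linarith
  moreover have "cs y - cs x \<le> real CARD('d) * norm (x - y)" using cs_diff_le[of y x] cs_le_norm[of "y - x"]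
    by (simp add: norm_minus_commute)
  ultimately show "dist (cs x) (cs y) \<le> real CARD('d) * dist x y" by (simp add: dist_norm abs_le_iff)
qed simp

lemma cs_continuous: "continuous_on UNIV (cs :: ('d::finite) mat \<Rightarrow> real)"
  by (rule lipschitz_on_continuous_on[OF cs_lipschitz])

lemma mult_continuous: "continuous_on UNIV (\<lambda>x :: ('d::finite) mat \<times> 'd mat. fst x ** snd x)"
  unfolding matrix_matrix_mult_def by (intro continuous_intros)

lemma mv_continuous: "continuous_on UNIV (\<lambda>a :: ('d::finite) mat. p *v (a *v z))"
  unfolding matrix_vector_mult_def by (intro continuous_intros)

lemma nonneg_closed: "closed (Collect nonneg_mat :: ('d::finite) mat set)"
proof -
  have "Collect nonneg_mat = (\<Inter>i. \<Inter>j. {a :: 'd mat. 0 \<le> a $ i $ j})"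
    by (auto simp: nonneg_mat_def)
  moreover have "closed (\<Inter>i. \<Inter>j. {a :: 'd mat. 0 \<le> a $ i $ j})"
    by (intro closed_INT ballI closed_Collect_le continuous_intros)
  ultimately show ?thesis by simp
qed

locale msetting =
  fixes \<mu> :: "('d::finite) mat measure"
  assumes prob: "prob_space \<mu>"
    and sets_mu: "sets \<mu> = sets borel"
    and nonneg_ae: "emeasure \<mu> (- Collect nonneg_mat) = 0"
    and C2: "cond_C2 \<mu>"
    and I1: "(\<integral>\<^sup>+ a. ennreal (opnorm1 a) \<partial>\<mu>) < \<infinity>"
begin

abbreviation "S \<equiv> msupp \<mu>"

lemma space_mu[simp]: "space \<mu> = UNIV"
  using sets_eq_imp_space_eq[OF sets_mu] by simp

lemma meas_borel: "f \<in> borel_measurable borel \<Longrightarrow> f \<in> borel_measurable \<mu>"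
  by (metis measurable_cong_sets sets_mu)

lemma sets_mu_open: "open U \<Longrightarrow> U \<in> sets \<mu>"
  using sets_mu by simp

lemma notS_iff: "a \<notin> S \<longleftrightarrow> (\<exists>e>0. emeasure \<mu> (ball a e) = 0)"
  unfolding msupp_def by (auto simp: not_less)

lemma null_ball_sub:
  assumes "emeasure \<mu> (ball a e) = 0" "U \<subseteq> ball a e" "U \<in> sets \<mu>"
  shows "emeasure \<mu> U = 0"
  using emeasure_mono[OF assms(2) sets_mu_open[OF open_ball]] assms(1) by simp

lemma open_notS: "open (- S)"
proof (rule openI)
  fix x assume "x \<in> - S"
  then obtain e where e: "e > 0" "emeasure \<mu> (ball x e) = 0" using notS_iff by auto
  have "ball x e \<subseteq> - S"
  proof
    fix y assume y: "y \<in> ball x e"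
    define e' where "e' = e - dist x y"
    have "e' > 0" using y by (simp add: e'_def)
    moreover have "ball y e' \<subseteq> ball x e" unfolding e'_def
      by (auto simp: ball_def) (metis add.commute dist_triangle less_diff_eq order.strict_trans1)
    ultimately show "y \<in> - S" using notS_iff null_ball_sub[OF e(2)] sets_mu_open[OF open_ball] by blast
  qed
  then show "\<exists>e>0. ball x e \<subseteq> - S" using e by blast
qed

lemma notS_null: "emeasure \<mu> (- S) = 0"
proof -
  obtain B :: "'d mat set set" where B: "countable B" "\<And>C. C \<in> B \<Longrightarrow> open C"
    "\<And>U. open U \<Longrightarrow> \<exists>V. V \<subseteq> B \<and> U = \<Union>V"
    by (rule univ_second_countable) (rule that; assumption)
  define B' where "B' = {b \<in> B. \<exists>a e. emeasure \<mu> (ball a e) = 0 \<and> b \<subseteq> ball a e}"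
  have "B' \<subseteq> B" unfolding B'_def by blast
  then have "countable B'" using B(1) countable_subset by blast
  have null: "b \<in> null_sets \<mu>" if "b \<in> B'" for b
  proof -
    from that obtain a e where h: "emeasure \<mu> (ball a e) = 0" "b \<subseteq> ball a e" "b \<in> B"
      unfolding B'_def by blast
    have bs: "b \<in> sets \<mu>" using B(2)[OF h(3)] sets_mu_open by blast
    then have "emeasure \<mu> b = 0" using null_ball_sub[OF h(1) h(2)] by blast
    then show ?thesis using bs by (simp add: null_sets_def)
  qed
  have nul: "(\<Union>b\<in>B'. b) \<in> null_sets \<mu>"
    by (rule null_sets_UN'[OF \<open>countable B'\<close> null])
  moreover have sub: "- S \<subseteq> (\<Union>b\<in>B'. b)"
  proof
    fix x assume "x \<in> - S"
    then have "x \<notin> S" by simp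
    then obtain e where e: "e > 0" "emeasure \<mu> (ball x e) = 0" unfolding notS_iff by blast
    obtain V where V: "V \<subseteq> B" "ball x e = \<Union>V" using B(3)[OF open_ball[of x e]] by (elim exE conjE)
    have "x \<in> ball x e" using e(1) by simp
    then have "x \<in> \<Union>V" unfolding V(2) .
    then obtain b where b: "b \<in> V" "x \<in> b" by (rule UnionE)
    have "b \<subseteq> ball x e" unfolding V(2) using b(1) by (rule Union_upper)
    then have "b \<in> B'" unfolding B'_def using V(1) b(1) e(2)
      by (intro CollectI conjI exI[of _ x] exI[of _ e]) auto
    then show "x \<in> (\<Union>b\<in>B'. b)" using b(2) by blast
  qed
  have ms: "- S \<in> sets \<mu>" using open_notS sets_mu_open by blast
  have "- S \<in> null_sets \<mu>" by (rule null_sets_subset[OF nul ms sub])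
  then show ?thesis by (rule null_setsD1)
qed

lemma notS_nullset: "- S \<in> null_sets \<mu>"
  using notS_null open_notS sets_mu_open by (simp add: null_sets_def)

lemma AE_S: "AE a in \<mu>. a \<in> S"
  by (rule AE_I'[OF notS_nullset]) blast

lemma S_nonneg: "a \<in> S \<Longrightarrow> nonneg_mat a"
proof (rule ccontr)
  assume a: "a \<in> S" "\<not> nonneg_mat a"
  have "open (- Collect nonneg_mat :: 'd mat set)" using nonneg_closed by (rule open_Compl)
  moreover have "a \<in> - Collect nonneg_mat" using a(2) by simp
  ultimately obtain e where e: "e > 0" "ball a e \<subseteq> - Collect nonneg_mat"
    unfolding open_contains_ball by blast
  have "emeasure \<mu> (ball a e) \<le> emeasure \<mu> (- Collect nonneg_mat)"
    by (rule emeasure_mono[OF e(2)]) (simp add: sets_mu_open[OF open_Compl[OF nonneg_closed]])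
  then have "emeasure \<mu> (ball a e) = 0" using nonneg_ae by simp
  then show False using a(1) e(1) unfolding msupp_def by auto
qed

lemma AE_nonneg: "AE a in \<mu>. nonneg_mat a"
  using AE_S by eventually_elim (rule S_nonneg)

lemma integrable_id: "integrable \<mu> (\<lambda>a. a)"
proof (rule integrableI_bounded)
  show "(\<lambda>a. a) \<in> borel_measurable \<mu>" by (rule meas_borel) simp
  have "(\<integral>\<^sup>+ a. ennreal (norm a) \<partial>\<mu>) \<le> (\<integral>\<^sup>+ a. ennreal (real CARD('d)) * ennreal (opnorm1 a) \<partial>\<mu>)"
    by (intro nn_integral_mono) (simp add: opnorm1_eq ennreal_mult'[symmetric] norm_le_cs cs_nonneg)
  also have "\<dots> = ennreal (real CARD('d)) * (\<integral>\<^sup>+ a. ennreal (opnorm1 a) \<partial>\<mu>)"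
    by (rule nn_integral_cmult) (auto intro!: meas_borel measurable_compose[OF _ measurable_ennreal]
          borel_measurable_continuous_onI cs_continuous simp: opnorm1_eq[abs_def])
  also have "\<dots> < \<infinity>" using I1 by (simp add: ennreal_mult_less_top)
  finally show "(\<integral>\<^sup>+ a. ennreal (norm a) \<partial>\<mu>) < \<infinity>" .
qed

lemma integral_linear:
  assumes "bounded_linear T"
  shows "(\<integral>a. T a \<partial>\<mu>) = T (\<integral>a. a \<partial>\<mu>)"
  using integral_bounded_linear[OF assms integrable_id] by simp

lemma integrable_linear:
  assumes "bounded_linear T"
  shows "integrable \<mu> (\<lambda>a. T a)"
  using integrable_bounded_linear[OF assms integrable_id] by simp

end

lemma sm_diff: "sm (x - y) = sm x - sm y" by (simp add: sm_def sum_subtractf)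

lemma l1_le_norm: "l1 (x :: real^('d::finite)) \<le> real CARD('d) * norm x"
proof -
  have "l1 x \<le> (\<Sum>i\<in>(UNIV::'d set). norm x)" unfolding l1_def
    by (intro sum_mono) (rule component_le_norm_cart)
  then show ?thesis by simp
qed

definition Fn :: "('d::finite) mat set \<Rightarrow> real \<Rightarrow> real^'d \<Rightarrow> real" where
  "Fn SS r y = Sup {sm (mprod as *v y) / r ^ length as | as. set as \<subseteq> SS}"

locale Fset =
  fixes SS :: "('d::finite) mat set" and r C :: real
  assumes SS_nonneg: "\<And>a. a \<in> SS \<Longrightarrow> nonneg_mat a"
    and r_pos: "r > 0" and C1: "C \<ge> 1"
    and bound: "\<And>as. set as \<subseteq> SS \<Longrightarrow> cs (mprod as) \<le> C * r ^ length as"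
begin

abbreviation "F \<equiv> Fn SS r"

lemma memb_le: "set as \<subseteq> SS \<Longrightarrow> sm (mprod as *v y) / r ^ length as \<le> C * l1 y"
proof -
  assume as: "set as \<subseteq> SS"
  have "sm (mprod as *v y) \<le> cs (mprod as) * l1 y" using sm_le_l1 l1_mv_le order_trans by blast
  also have "\<dots> \<le> C * r ^ length as * l1 y" by (rule mult_right_mono[OF bound[OF as] l1_nonneg])
  finally show ?thesis using r_pos by (simp add: divide_le_eq mult.commute mult.left_commute)
qed

lemma Fset_bdd: "bdd_above {sm (mprod as *v y) / r ^ length as | as. set as \<subseteq> SS}"
  using memb_le by (intro bdd_aboveI[where M="C * l1 y"]) blast

lemma Fset_ne: "{sm (mprod as *v y) / r ^ length as | as. set as \<subseteq> SS} \<noteq> {}"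
  by (auto intro!: exI[of _ "[]"])

lemma F_ge: "set as \<subseteq> SS \<Longrightarrow> sm (mprod as *v y) / r ^ length as \<le> F y"
  unfolding Fn_def by (rule cSup_upper[OF _ Fset_bdd]) blast

lemma F_least: "(\<And>as. set as \<subseteq> SS \<Longrightarrow> sm (mprod as *v y) / r ^ length as \<le> M) \<Longrightarrow> F y \<le> M"
  unfolding Fn_def by (rule cSup_least[OF Fset_ne]) blast

lemma F_le: "F y \<le> C * l1 y"
  by (rule F_least) (rule memb_le)

lemma F_ge_sm: "sm y \<le> F y"
  using F_ge[of "[]" y] by simp

lemma F_abs: "\<bar>F y\<bar> \<le> C * l1 y"
proof -
  have "- l1 y \<le> sm y" using abs_sm_le_l1[of y] by linarith
  moreover have "l1 y \<le> C * l1 y" using C1 l1_nonneg[of y] by (simp add: mult_le_cancel_right1)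
  ultimately show ?thesis using F_ge_sm[of y] F_le[of y] by linarith
qed

lemma F_lip1: "F x \<le> F y + C * l1 (x - y)"
proof (rule F_least)
  fix as assume as: "set as \<subseteq> SS"
  have "sm (mprod as *v x) / r ^ length as
      = sm (mprod as *v y) / r ^ length as + sm (mprod as *v (x - y)) / r ^ length as"
    by (simp add: matrix_vector_mult_diff_distrib sm_diff add_divide_distrib[symmetric])
  also have "\<dots> \<le> F y + C * l1 (x - y)" by (intro add_mono F_ge memb_le as)
  finally show "sm (mprod as *v x) / r ^ length as \<le> F y + C * l1 (x - y)" .
qed

lemma F_lipschitz: "(C * real CARD('d))-lipschitz_on UNIV F"
proof (rule lipschitz_onI)
  fix x y :: "real^'d"
  have "F x - F y \<le> C * l1 (x - y)" using F_lip1[of x y] by simp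
  also have "\<dots> \<le> C * (real CARD('d) * norm (x - y))" using C1 by (intro mult_left_mono l1_le_norm) auto
  finally have 1: "F x - F y \<le> C * real CARD('d) * dist x y" by (simp add: dist_norm)
  have "F y - F x \<le> C * l1 (y - x)" using F_lip1[of y x] by simp
  also have "\<dots> \<le> C * (real CARD('d) * norm (y - x))" using C1 by (intro mult_left_mono l1_le_norm) auto
  finally have 2: "F y - F x \<le> C * real CARD('d) * dist x y" by (simp add: dist_norm norm_minus_commute)
  show "dist (F x) (F y) \<le> C * real CARD('d) * dist x y" using 1 2 by (simp add: dist_real_def abs_le_iff)
qed (use C1 in simp)

lemma F_cont: "continuous_on UNIV F"
  by (rule lipschitz_on_continuous_on[OF F_lipschitz])

lemma mprod_nonneg: "set as \<subseteq> SS \<Longrightarrow> nonneg_mat (mprod as)"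
  by (rule nonneg_mprod) (use SS_nonneg in blast)

lemma F_mono: "(\<And>i. x$i \<le> y$i) \<Longrightarrow> F x \<le> F y"
proof (rule F_least)
  fix as assume xy: "\<And>i. x$i \<le> y$i" and as: "set as \<subseteq> SS"
  have "sm (mprod as *v x) \<le> sm (mprod as *v y)" unfolding sm_def
    by (intro sum_mono mv_mono mprod_nonneg[OF as]) (use xy in blast)
  then have "sm (mprod as *v x) / r ^ length as \<le> sm (mprod as *v y) / r ^ length as"
    using r_pos by (simp add: divide_right_mono)
  also have "\<dots> \<le> F y" by (rule F_ge[OF as])
  finally show "sm (mprod as *v x) / r ^ length as \<le> F y" .
qed

lemma F_scale: "c > 0 \<Longrightarrow> c * F y \<le> F (c *\<^sub>R y)"
proof -
  assume c: "c > 0"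
  have "F y \<le> F (c *\<^sub>R y) / c"
  proof (rule F_least)
    fix as assume as: "set as \<subseteq> SS"
    have "sm (mprod as *v y) / r ^ length as = (sm (mprod as *v (c *\<^sub>R y)) / r ^ length as) / c"
      using c by (simp add: matrix_vector_mult_scaleR sm_scale)
    also have "\<dots> \<le> F (c *\<^sub>R y) / c" by (rule divide_right_mono[OF F_ge[OF as]]) (use c in simp)
    finally show "sm (mprod as *v y) / r ^ length as \<le> F (c *\<^sub>R y) / c" .
  qed
  then show ?thesis using c by (simp add: le_divide_eq mult.commute)
qed

lemma F_shift: "set ps \<subseteq> SS \<Longrightarrow> F (mprod ps *v y) \<le> r ^ length ps * F y"
proof -
  assume ps: "set ps \<subseteq> SS"
  have "F (mprod ps *v y) \<le> r ^ length ps * F y"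
  proof (rule F_least)
    fix as assume as: "set as \<subseteq> SS"
    have "sm (mprod as *v (mprod ps *v y)) / r ^ length as
        = r ^ length ps * (sm (mprod (as @ ps) *v y) / r ^ length (as @ ps))"
      using r_pos by (simp add: mprod_append matrix_vector_mul_assoc power_add field_simps)
    also have "\<dots> \<le> r ^ length ps * F y"
      using as ps r_pos by (intro mult_left_mono F_ge) auto
    finally show "sm (mprod as *v (mprod ps *v y)) / r ^ length as \<le> r ^ length ps * F y" .
  qed
  then show ?thesis .
qed

end

context msetting
begin

lemma Abar_entry: "(\<integral>a. a \<partial>\<mu>) $ i $ j = (\<integral>a. a $ i $ j \<partial>\<mu>)"
proof -
  have bl: "bounded_linear (\<lambda>a :: 'd mat. a $ i $ j)"
    using bounded_linear_compose[OF bounded_linear_vec_nth bounded_linear_vec_nth] .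
  show ?thesis using integral_linear[OF bl] by simp
qed

lemma Abar_nonneg: "nonneg_mat (\<integral>a. a \<partial>\<mu>)"
  unfolding nonneg_mat_def Abar_entry
proof (intro allI integral_nonneg_AE)
  fix i j show "AE a in \<mu>. 0 \<le> a $ i $ j"
    using AE_nonneg by eventually_elim (simp add: nonneg_mat_def)
qed

lemma support_eq:
  fixes f :: "'d mat \<Rightarrow> real"
  assumes cont: "continuous_on UNIV f" and int: "integrable \<mu> f"
    and le: "\<And>a. a \<in> S \<Longrightarrow> f a \<le> c" and ge: "c \<le> (\<integral>a. f a \<partial>\<mu>)"
    and a0: "a0 \<in> S"
  shows "f a0 = c"
proof (rule ccontr)
  interpret prob_space \<mu> by (rule prob)
  assume "f a0 \<noteq> c"
  then have lt: "f a0 < c" using le[OF a0] by simp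
  define \<delta> where "\<delta> = (c - f a0) / 2"
  have \<delta>: "\<delta> > 0" using lt by (simp add: \<delta>_def)
  have "isCont f a0" using cont by (simp add: continuous_on_eq_continuous_at)
  then obtain e where e: "e > 0" "\<And>x. dist x a0 < e \<Longrightarrow> dist (f x) (f a0) < \<delta>"
    unfolding continuous_at_eps_delta using \<delta> by blast
  have fb: "f x < c - \<delta>" if "x \<in> ball a0 e" for x
  proof -
    have "\<bar>f x - f a0\<bar> < \<delta>" using e(2)[of x] that by (simp add: dist_commute dist_real_def)
    then have "f x - f a0 < \<delta>" by (simp add: abs_less_iff)
    moreover have "2 * \<delta> = c - f a0" by (simp add: \<delta>_def)
    ultimately show ?thesis by linarith
  qed
  have bs: "ball a0 e \<in> sets \<mu>" by (rule sets_mu_open) simp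
  have pos: "emeasure \<mu> (ball a0 e) > 0" using a0 e(1) unfolding msupp_def by blast
  then have mpos: "measure \<mu> (ball a0 e) > 0" by (simp add: emeasure_eq_measure)
  define g where "g x = c - \<delta> * indicator (ball a0 e) x" for x
  have ii: "integrable \<mu> (indicator (ball a0 e) :: _ \<Rightarrow> real)"
    by (rule integrable_real_indicator[OF bs]) (simp add: less_top[symmetric] emeasure_finite)
  have gint: "integrable \<mu> g" unfolding g_def
    using ii by (intro Bochner_Integration.integrable_diff integrable_mult_right) auto
  have "AE x in \<mu>. f x \<le> g x"
    using AE_S
  proof eventually_elim
    case (elim x)
    show ?case
    proof (cases "x \<in> ball a0 e")
      case True then show ?thesis using fb[OF True] by (simp add: g_def)
    next
      case False then show ?thesis using le[OF elim] by (simp add: g_def)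
    qed
  qed
  then have "(\<integral>a. f a \<partial>\<mu>) \<le> (\<integral>a. g a \<partial>\<mu>)" by (rule integral_mono_AE[OF int gint])
  also have "(\<integral>a. g a \<partial>\<mu>) = c - \<delta> * measure \<mu> (ball a0 e)"
  proof -
    have pu: "prob UNIV = 1" using prob_space by simp
    show ?thesis unfolding g_def using bs ii pu by (subst Bochner_Integration.integral_diff) auto
  qed
  also have "\<dots> < c" using \<delta> mpos by simp
  finally show False using ge by simp
qed

end

locale main = msetting \<mu> + Fset "msupp \<mu>" r C for \<mu> :: "('d::finite) mat measure" and r C +
  assumes r_eq: "r = spec_rad (\<integral>a. a \<partial>\<mu>)"
begin

abbreviation "Abar \<equiv> (\<integral>a. a \<partial>\<mu>)"

lemma Fp_cont:
  fixes p :: "'d mat" and z :: "real^'d"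
  shows "continuous_on UNIV (\<lambda>a. F (p *v (a *v z)))"
  using continuous_on_compose[OF mv_continuous[where p=p and z=z] continuous_on_subset[OF F_cont]]
  by (simp add: o_def)

lemma integrable_Fp:
  fixes p :: "'d mat" and z :: "real^'d"
  shows "integrable \<mu> (\<lambda>a. F (p *v (a *v z)))"
proof -
  define K0 where "K0 = C * cs p * real CARD('d) * l1 z"
  have K0: "K0 \<ge> 0" using C1 by (simp add: K0_def cs_nonneg l1_nonneg)
  show ?thesis
  proof (rule Bochner_Integration.integrable_bound[of \<mu> "\<lambda>a. K0 *\<^sub>R a"])
    show "integrable \<mu> (\<lambda>a. K0 *\<^sub>R a)" using integrable_id by simp
    show "(\<lambda>a. F (p *v (a *v z))) \<in> borel_measurable \<mu>"
      by (rule meas_borel, rule borel_measurable_continuous_onI, rule Fp_cont)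
    show "AE a in \<mu>. norm (F (p *v (a *v z))) \<le> norm (K0 *\<^sub>R a)"
    proof (rule AE_I2)
      fix a :: "'d mat"
      have "norm (F (p *v (a *v z))) \<le> C * l1 (p *v (a *v z))" using F_abs by simp
      also have "\<dots> \<le> C * (cs p * (cs a * l1 z))"
        using C1 l1_mv_le[of p "a *v z"] l1_mv_le[of a z] cs_nonneg[of p]
        by (intro mult_left_mono) (auto intro: order_trans mult_left_mono)
      also have "\<dots> \<le> C * (cs p * ((real CARD('d) * norm a) * l1 z))"
        using C1 cs_nonneg[of p] l1_nonneg[of z]
        by (intro mult_left_mono mult_right_mono cs_le_norm) auto
      also have "\<dots> = norm (K0 *\<^sub>R a)" using K0 by (simp add: K0_def)
      finally show "norm (F (p *v (a *v z))) \<le> norm (K0 *\<^sub>R a)" .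
    qed
  qed
qed

lemma T_linear:
  fixes p g :: "'d mat" and z :: "real^'d"
  shows "bounded_linear (\<lambda>a :: 'd mat. sm (g *v (p *v (a *v z))) / r ^ n)"
proof -
  have "linear (\<lambda>a :: 'd mat. sm (g *v (p *v (a *v z))) / r ^ n)"
  proof (rule linearI)
    fix a b :: "'d mat"
    show "sm (g *v (p *v ((a + b) *v z))) / r ^ n
        = sm (g *v (p *v (a *v z))) / r ^ n + sm (g *v (p *v (b *v z))) / r ^ n"
      by (simp add: matrix_vector_mult_add_rdistrib matrix_vector_right_distrib sm_add add_divide_distrib)
  next
    fix c :: real and a :: "'d mat"
    show "sm (g *v (p *v ((c *\<^sub>R a) *v z))) / r ^ n = c *\<^sub>R (sm (g *v (p *v (a *v z))) / r ^ n)"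
      by (simp add: scaleR_matrix_vector_assoc[symmetric] matrix_vector_mult_scaleR sm_scale)
  qed
  then show ?thesis by (simp add: linear_conv_bounded_linear)
qed

lemma int_Fp_ge:
  fixes p :: "'d mat" and z :: "real^'d"
  shows "F (p *v (Abar *v z)) \<le> (\<integral>a. F (p *v (a *v z)) \<partial>\<mu>)"
proof (rule F_least)
  fix as assume as: "set as \<subseteq> S"
  let ?T = "\<lambda>a :: 'd mat. sm (mprod as *v (p *v (a *v z))) / r ^ length as"
  have "?T Abar = (\<integral>a. ?T a \<partial>\<mu>)" by (rule integral_linear[OF T_linear, symmetric])
  also have "\<dots> \<le> (\<integral>a. F (p *v (a *v z)) \<partial>\<mu>)"
    by (rule integral_mono[OF integrable_linear[OF T_linear] integrable_Fp]) (rule F_ge[OF as])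
  finally show "?T Abar \<le> (\<integral>a. F (p *v (a *v z)) \<partial>\<mu>)" .
qed

lemma F_orbit:
  assumes z: "\<And>i. z $ i \<ge> 0" and Az: "\<And>i. (Abar *v z) $ i \<ge> r * z $ i"
  shows "set ps \<subseteq> S \<Longrightarrow> F (mprod ps *v z) = r ^ length ps * F z"
proof (induction ps rule: rev_induct)
  case Nil then show ?case by simp
next
  case (snoc a ps)
  let ?p = "mprod ps"
  let ?n = "length ps"
  have ps: "set ps \<subseteq> S" and aS: "a \<in> S" using snoc.prems by auto
  have IH: "F (?p *v z) = r ^ ?n * F z" using snoc.IH ps by blast
  have rn: "r ^ ?n \<ge> 0" using r_pos by simp
  have upper: "F (?p *v (b *v z)) \<le> r ^ Suc ?n * F z" if b: "b \<in> S" for b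
  proof -
    have "F (?p *v (b *v z)) \<le> r ^ ?n * F (b *v z)" by (rule F_shift[OF ps])
    also have "F (b *v z) \<le> r * F z" using F_shift[of "[b]" z] b by simp
    then have "r ^ ?n * F (b *v z) \<le> r ^ ?n * (r * F z)" using rn by (rule mult_left_mono)
    finally show ?thesis by (simp add: mult_ac)
  qed
  have "r ^ Suc ?n * F z = r * F (?p *v z)" using IH by simp
  also have "\<dots> \<le> F (r *\<^sub>R (?p *v z))" by (rule F_scale[OF r_pos])
  also have "\<dots> = F (?p *v (r *\<^sub>R z))" by (simp add: matrix_vector_mult_scaleR)
  also have "\<dots> \<le> F (?p *v (Abar *v z))"
    by (intro F_mono mv_mono mprod_nonneg ps) (use Az in simp)
  also have "\<dots> \<le> (\<integral>b. F (?p *v (b *v z)) \<partial>\<mu>)" by (rule int_Fp_ge)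
  finally have ge: "r ^ Suc ?n * F z \<le> (\<integral>b. F (?p *v (b *v z)) \<partial>\<mu>)" .
  have "F (?p *v (a *v z)) = r ^ Suc ?n * F z"
    by (rule support_eq[OF Fp_cont integrable_Fp upper ge aS])
  then show ?case by (simp add: mprod_snoc matrix_vector_mul_assoc)
qed

lemma cs_lower:
  assumes z: "\<And>i. z $ i \<ge> 0" "z \<noteq> 0" and Az: "\<And>i. (Abar *v z) $ i \<ge> r * z $ i"
    and ps: "set ps \<subseteq> S"
  shows "r ^ length ps \<le> C * cs (mprod ps)"
proof -
  have l1z: "l1 z > 0"
  proof -
    obtain i where "z $ i \<noteq> 0" using z(2) by (metis vec_eq_iff zero_index)
    then have "\<bar>z $ i\<bar> > 0" by simp
    also have "\<bar>z $ i\<bar> \<le> l1 z" unfolding l1_def by (rule member_le_sum) auto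
    finally show ?thesis .
  qed
  have Fz: "l1 z \<le> F z" using F_ge_sm[of z] l1_sm[of z] z(1) by simp
  have "r ^ length ps * l1 z \<le> r ^ length ps * F z" using Fz r_pos by simp
  also have "\<dots> = F (mprod ps *v z)" using F_orbit[OF z(1) Az ps] by simp
  also have "\<dots> \<le> C * l1 (mprod ps *v z)" by (rule F_le)
  also have "\<dots> \<le> C * (cs (mprod ps) * l1 z)" using C1 by (intro mult_left_mono l1_mv_le) auto
  finally have "r ^ length ps * l1 z \<le> (C * cs (mprod ps)) * l1 z" by (simp add: mult.assoc)
  then show ?thesis using l1z by simp
qed

end

context msetting
begin

lemma comp_meas: "i \<in> I \<Longrightarrow> (\<lambda>m. m i) \<in> borel_measurable (PiM I (\<lambda>_. \<mu>))"
  using measurable_component_singleton[of i I "\<lambda>_. \<mu>"] by (metis measurable_cong_sets sets_mu)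

lemma mprod_meas: "n \<le> N \<Longrightarrow> (\<lambda>m. mprod (map m [0..<n])) \<in> borel_measurable (PiM {0..<N} (\<lambda>_. \<mu>))"
proof (induction n)
  case 0 then show ?case by simp
next
  case (Suc n)
  have eq: "(\<lambda>m. mprod (map m [0..<Suc n])) = (\<lambda>m. mprod (map m [0..<n]) ** m n)"
    by (simp add: mprod_snoc)
  have m1: "(\<lambda>m. mprod (map m [0..<n])) \<in> borel_measurable (PiM {0..<N} (\<lambda>_. \<mu>))"
    using Suc.IH Suc.prems by simp
  have m2: "(\<lambda>m. m n) \<in> borel_measurable (PiM {0..<N} (\<lambda>_. \<mu>))"
    by (rule comp_meas) (use Suc.prems in simp)
  show ?case unfolding eq
    by (rule borel_measurable_continuous_Pair[OF m1 m2 mult_continuous])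
qed

lemma lnF_meas: "(\<lambda>m. ln (opnorm1 (mprod (map m [0..<n])))) \<in> borel_measurable (PiM {0..<n} (\<lambda>_. \<mu>))"
  unfolding opnorm1_eq
  by (intro borel_measurable_ln borel_measurable_continuous_on[OF cs_continuous] mprod_meas) simp

lemma lyap_eq:
  assumes r: "r > 0" and C: "C \<ge> 1"
    and bnd: "\<And>as. set as \<subseteq> S \<Longrightarrow> r ^ length as \<le> C * cs (mprod as) \<and> cs (mprod as) \<le> C * r ^ length as"
  shows "lyap \<mu> = ln r"
proof -
  define I where "I n = (\<integral>m. ln (opnorm1 (mprod (map m [0..<n]))) \<partial>(PiM {0..<n} (\<lambda>_. \<mu>)))" for n
  have Ibnd: "\<bar>I n - real n * ln r\<bar> \<le> ln C" for n
  proof -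
    let ?P = "PiM {0..<n} (\<lambda>_. \<mu>)"
    let ?f = "\<lambda>m. ln (opnorm1 (mprod (map m [0..<n])))"
    interpret P: prob_space ?P by (rule prob_space_PiM) (rule prob)
    have AE: "AE m in ?P. \<forall>i\<in>{0..<n}. m i \<in> S"
    proof (rule AE_finite_allI)
      fix i assume i: "i \<in> {0..<n}"
      show "AE m in ?P. m i \<in> S"
        by (rule AE_PiM_component[where M="\<lambda>_. \<mu>" and P="\<lambda>a. a \<in> S", OF prob i AE_S])
    qed simp
    have lnC: "ln C \<ge> 0" using C by simp
    have pt: "\<bar>?f m - real n * ln r\<bar> \<le> ln C" if m: "\<forall>i\<in>{0..<n}. m i \<in> S" for m
    proof -
      let ?as = "map m [0..<n]"
      have as: "set ?as \<subseteq> S" "length ?as = n" using m by auto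
      have b: "r ^ n \<le> C * cs (mprod ?as)" "cs (mprod ?as) \<le> C * r ^ n" using bnd[OF as(1)] as(2) by auto
      have rn: "r ^ n > 0" using r by simp
      have "C * cs (mprod ?as) > 0" using b(1) rn by linarith
      then have cpos: "cs (mprod ?as) > 0" using C by (simp add: zero_less_mult_iff)
      have "ln (C * cs (mprod ?as)) \<ge> ln (r ^ n)" using b(1) rn by simp
      then have 1: "ln C + ln (cs (mprod ?as)) \<ge> real n * ln r" using C cpos r by (simp add: ln_mult ln_realpow)
      have "ln (cs (mprod ?as)) \<le> ln (C * r ^ n)" using b(2) cpos by simp
      then have 2: "ln (cs (mprod ?as)) \<le> ln C + real n * ln r" using C rn r by (simp add: ln_mult ln_realpow)
      show ?thesis using 1 2 by (simp add: opnorm1_eq abs_le_iff)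
    qed
    have fb: "AE m in ?P. norm (?f m) \<le> norm (\<bar>real n * ln r\<bar> + ln C)"
      using AE
    proof eventually_elim
      case (elim m) then show ?case using pt[OF elim] lnC by (simp add: abs_le_iff) linarith
    qed
    have int: "integrable ?P ?f"
      by (rule Bochner_Integration.integrable_bound[OF _ lnF_meas fb]) simp
    have AEl: "AE m in ?P. real n * ln r - ln C \<le> ?f m"
      using AE by eventually_elim (use pt in \<open>fastforce simp: abs_le_iff\<close>)
    have AEh: "AE m in ?P. ?f m \<le> real n * ln r + ln C"
      using AE by eventually_elim (use pt in \<open>fastforce simp: abs_le_iff\<close>)
    have lo: "(\<integral>m. real n * ln r - ln C \<partial>?P) \<le> I n" unfolding I_def
      by (rule integral_mono_AE[OF _ int AEl]) simp
    have hi: "I n \<le> (\<integral>m. real n * ln r + ln C \<partial>?P)" unfolding I_def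
      by (rule integral_mono_AE[OF int _ AEh]) simp
    show ?thesis using lo hi by (simp add: P.prob_space abs_le_iff)
  qed
  have lim: "(\<lambda>n. I n / real n) \<longlonglongrightarrow> ln r"
  proof -
    have "(\<lambda>n. I n / real n - ln r) \<longlonglongrightarrow> 0"
    proof (rule Lim_null_comparison)
      show "\<forall>\<^sub>F n in sequentially. norm (I n / real n - ln r) \<le> ln C / real n"
        using eventually_gt_at_top[of 0]
      proof eventually_elim
        case (elim n)
        then have "I n / real n - ln r = (I n - real n * ln r) / real n" by (simp add: field_simps)
        then show ?case using Ibnd[of n] elim by (simp add: divide_right_mono)
      qed
      show "(\<lambda>n. ln C / real n) \<longlonglongrightarrow> 0" by (rule lim_const_over_n)
    qed
    then have "(\<lambda>n. (I n / real n - ln r) + ln r) \<longlonglongrightarrow> 0 + ln r" by (intro tendsto_add tendsto_const)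
    then show ?thesis by simp
  qed
  show ?thesis unfolding lyap_def using limI[OF lim] by (simp add: I_def)
qed

end

lemma sandwich_entry:
  fixes g h :: "('d::finite) mat"
  assumes h: "nonneg_mat h" and g: "\<And>i j. g $ i $ j \<ge> m" and m: "m \<ge> 0"
  shows "((g ** h) ** g) $ i $ j \<ge> m * m * (\<Sum>k\<in>UNIV. \<Sum>l\<in>UNIV. h $ k $ l)"
proof -
  define cl where "cl l = (\<Sum>k\<in>UNIV. h $ k $ l)" for l
  have cl0: "cl l \<ge> 0" for l using h by (auto simp: cl_def nonneg_mat_def intro: sum_nonneg)
  have gh: "(g ** h) $ i $ l \<ge> m * cl l" for l
  proof -
    have "m * cl l = (\<Sum>k\<in>UNIV. m * h $ k $ l)" by (simp add: cl_def sum_distrib_left)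
    also have "\<dots> \<le> (\<Sum>k\<in>UNIV. g $ i $ k * h $ k $ l)"
      using h g by (intro sum_mono mult_right_mono) (auto simp: nonneg_mat_def)
    finally show ?thesis by (simp add: matrix_matrix_mult_def)
  qed
  have "m * m * (\<Sum>k\<in>UNIV. \<Sum>l\<in>UNIV. h $ k $ l) = (\<Sum>l\<in>UNIV. (m * cl l) * m)"
    by (subst sum.swap) (simp add: cl_def sum_distrib_left sum_distrib_right mult_ac)
  also have "\<dots> \<le> (\<Sum>l\<in>UNIV. (g ** h) $ i $ l * g $ l $ j)"
  proof (intro sum_mono mult_mono)
    fix l
    show "m * cl l \<le> (g ** h) $ i $ l" by (rule gh)
    show "m \<le> g $ l $ j" by (rule g)
    show "0 \<le> m" by (rule m)
    have "0 \<le> m * cl l" using m cl0[of l] by simp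
    then show "0 \<le> (g ** h) $ i $ l" using gh[of l] by linarith
  qed
  finally show ?thesis by (simp add: matrix_matrix_mult_def)
qed

context msetting
begin

lemma upper_bound:
  fixes r R :: real
  assumes r: "r > 0" and R: "R > 0"
    and H: "\<And>K as. K > 0 \<Longrightarrow> length as = K \<Longrightarrow> set as \<subseteq> S \<Longrightarrow> pos_mat (mprod as) \<Longrightarrow>
             spec_rad (mprod as) < R * r ^ K"
  shows "\<exists>C\<ge>1. \<forall>as. set as \<subseteq> S \<longrightarrow> cs (mprod as) \<le> C * r ^ length as"
proof -
  obtain as0 where as0: "set as0 \<subseteq> S" "pos_mat (mprod as0)"
    using C2 unfolding cond_C2_def gen_semigroup_def by blast
  define g0 where "g0 = mprod as0"
  define m where "m = Min (range (\<lambda>p :: 'd \<times> 'd. g0 $ fst p $ snd p))"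
  have mle: "m \<le> g0 $ i $ j" for i j unfolding m_def by (rule Min_le) (auto intro: image_eqI[of _ _ "(i, j)"])
  have "m \<in> range (\<lambda>p :: 'd \<times> 'd. g0 $ fst p $ snd p)" unfolding m_def by (rule Min_in) auto
  then have m0: "m > 0" using as0(2) by (auto simp: pos_mat_def g0_def)
  define L where "L = length as0"
  define C where "C = max 1 (R * r ^ (2 * L) / (m * m))"
  have C1: "C \<ge> 1" by (simp add: C_def)
  have "cs (mprod as) \<le> C * r ^ length as" if as: "set as \<subseteq> S" for as
  proof (cases "as = []")
    case True then show ?thesis using C1 by (simp add: cs_id)
  next
    case False
    define h where "h = mprod as"
    define n where "n = length as"
    have hnn: "nonneg_mat h" unfolding h_def by (rule nonneg_mprod) (use as S_nonneg in blast)
    define Tot where "Tot = (\<Sum>k\<in>UNIV. \<Sum>l\<in>UNIV. h $ k $ l)"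
    have "h \<in> gen_semigroup S" using as unfolding gen_semigroup_def h_def by blast
    then obtain i0 j0 where hpos: "h $ i0 $ j0 > 0" using C2 unfolding cond_C2_def by blast
    have "h $ i0 $ j0 \<le> (\<Sum>l\<in>UNIV. h $ i0 $ l)"
      by (rule member_le_sum) (use hnn in \<open>auto simp: nonneg_mat_def\<close>)
    also have "\<dots> \<le> Tot" unfolding Tot_def
      by (rule member_le_sum[where f="\<lambda>k. \<Sum>l\<in>UNIV. h $ k $ l"])
         (use hnn in \<open>auto simp: nonneg_mat_def intro: sum_nonneg\<close>)
    finally have Tpos: "Tot > 0" using hpos by linarith
    have csT: "cs h \<le> Tot"
    proof -
      obtain j where j: "cs h = colsum h j" using cs_attained by blast
      have "colsum h j = (\<Sum>k\<in>UNIV. h $ k $ j)" using hnn by (simp add: colsum_def nonneg_mat_def)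
      also have "\<dots> \<le> Tot" unfolding Tot_def
        by (intro sum_mono member_le_sum) (use hnn in \<open>auto simp: nonneg_mat_def\<close>)
      finally show ?thesis using j by simp
    qed
    let ?big = "as0 @ as @ as0"
    have bigeq: "mprod ?big = (g0 ** h) ** g0"
      by (simp add: mprod_append g0_def h_def matrix_mul_assoc)
    have ent: "mprod ?big $ i $ j \<ge> m * m * Tot" for i j
      unfolding bigeq Tot_def using sandwich_entry[OF hnn, where g=g0 and m=m] mle m0 by simp
    have mmT: "m * m * Tot > 0" using m0 Tpos by simp
    have pos: "pos_mat (mprod ?big)" unfolding pos_mat_def using less_le_trans[OF mmT ent] by blast
    have sr: "spec_rad (mprod ?big) \<ge> m * m * Tot" by (rule spec_rad_lower[OF mmT ent])
    have K: "length ?big = 2 * L + n" by (simp add: L_def n_def)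
    have big_pos: "length ?big > 0" using False by simp
    have big_S: "set ?big \<subseteq> S" using as as0(1) by simp
    have "m * m * cs h \<le> m * m * Tot" using csT m0 by simp
    also have "\<dots> \<le> spec_rad (mprod ?big)" by (rule sr)
    also have "\<dots> < R * r ^ length ?big" by (rule H[OF big_pos refl big_S pos])
    also have "\<dots> = R * r ^ (2 * L) * r ^ n" unfolding K by (simp add: power_add)
    finally have "m * m * cs h < R * r ^ (2 * L) * r ^ n" .
    then have "cs h < (R * r ^ (2 * L) / (m * m)) * r ^ n"
      using m0 by (simp add: field_simps)
    also have "\<dots> \<le> C * r ^ n" using r by (intro mult_right_mono) (auto simp: C_def)
    finally show ?thesis by (simp add: h_def n_def)
  qed
  then show ?thesis using C1 by blast
qed

lemma final:
  assumes rEA: "spec_rad (\<integral>a. a \<partial>\<mu>) > exp (lyap \<mu>)"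
  shows "\<forall>R>0. \<exists>K>0. \<exists>as. length as = K \<and> set as \<subseteq> S \<and>
            pos_mat (mprod as) \<and> spec_rad (mprod as) \<ge> R * (spec_rad (\<integral>a. a \<partial>\<mu>)) ^ K"
proof (rule ccontr)
  define r where "r = spec_rad (\<integral>a. a \<partial>\<mu>)"
  have r: "r > 0" using rEA unfolding r_def by (meson exp_gt_zero less_trans)
  assume "\<not> ?thesis"
  then obtain R where R: "R > 0" and H0: "\<not> (\<exists>K>0. \<exists>as. length as = K \<and> set as \<subseteq> S \<and>
            pos_mat (mprod as) \<and> spec_rad (mprod as) \<ge> R * r ^ K)"
    unfolding r_def by blast
  have H: "spec_rad (mprod as) < R * r ^ K"
    if "K > 0" "length as = K" "set as \<subseteq> S" "pos_mat (mprod as)" for K as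
  proof (rule ccontr)
    assume "\<not> spec_rad (mprod as) < R * r ^ K"
    then have "R * r ^ K \<le> spec_rad (mprod as)" by simp
    then show False using H0 that by blast
  qed
  obtain C where C: "C \<ge> 1" "\<And>as. set as \<subseteq> S \<Longrightarrow> cs (mprod as) \<le> C * r ^ length as"
    using upper_bound[OF r R H] by blast
  interpret main \<mu> r C
    by unfold_locales (auto simp: S_nonneg r C intro: r_def)
  obtain z where z: "\<And>i. z $ i \<ge> 0" "z \<noteq> 0" "\<And>i. (Abar *v z) $ i \<ge> r * z $ i"
    using nonneg_eigvec[OF Abar_nonneg] unfolding r_def by blast
  have "lyap \<mu> = ln r"
    by (rule lyap_eq[OF r C(1)]) (simp add: cs_lower[OF z] C(2))
  then have "exp (lyap \<mu>) = r" using r by simp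
  then show False using rEA unfolding r_def by simp
qed

end

theorem lemma2p6:
  fixes M :: "'w measure" and N :: "'w \<Rightarrow> nat" and A :: "nat \<Rightarrow> 'w \<Rightarrow> ('d::finite) mat"
    and \<mu> :: "'d mat measure"
  assumes M: "prob_space M"
    and N_meas: "N \<in> measurable M (count_space UNIV)"
    and A_meas: "\<And>i. A i \<in> borel_measurable M"
    and C1_N: "AE \<omega> in M. N \<omega> \<ge> 1"
    and C1_EN: "integrable M (\<lambda>\<omega>. real (N \<omega>))" "(\<integral>\<omega>. real (N \<omega>) \<partial>M) > 1"
    and C1_G: "\<And>i \<omega>. \<omega> \<in> space M \<Longrightarrow> nonneg_mat (A i \<omega>)"
    and C1_nz: "\<And>i \<omega>. \<omega> \<in> space M \<Longrightarrow> i \<ge> 1 \<Longrightarrow> (A i \<omega> \<noteq> 0 \<longleftrightarrow> i \<le> N \<omega>)"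
    and mu_sets: "sets \<mu> = sets borel"
    and mu_def: "\<And>B. B \<in> sets borel \<Longrightarrow>
       emeasure \<mu> B = ennreal ((\<integral>\<omega>. (\<Sum>i\<in>{1..N \<omega>}. indicator B (A i \<omega>)) \<partial>M)
                                / (\<integral>\<omega>. real (N \<omega>) \<partial>M))"
    and C2: "cond_C2 \<mu>"
    and logN: "(\<integral>\<^sup>+ a. logplus_N a \<partial>\<mu>) < \<infinity>"
    and I1: "(\<integral>\<^sup>+ a. ennreal (opnorm1 a) \<partial>\<mu>) < \<infinity>"
    and rEA: "spec_rad (\<integral>a. a \<partial>\<mu>) > exp (lyap \<mu>)"
  shows "\<forall>R>0. \<exists>K>0. \<exists>as. length as = K \<and> set as \<subseteq> msupp \<mu> \<and>
            pos_mat (mprod as) \<and> spec_rad (mprod as) \<ge> R * (spec_rad (\<integral>a. a \<partial>\<mu>)) ^ K"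
proof -
  have space_mu: "space \<mu> = UNIV" using sets_eq_imp_space_eq[OF mu_sets] by simp
  have ENpos: "(\<integral>\<omega>. real (N \<omega>) \<partial>M) \<noteq> 0" using C1_EN(2) by simp
  have "emeasure \<mu> UNIV = ennreal ((\<integral>\<omega>. (\<Sum>i\<in>{1..N \<omega>}. indicator UNIV (A i \<omega>)) \<partial>M)
                                / (\<integral>\<omega>. real (N \<omega>) \<partial>M))"
    by (rule mu_def) simp
  also have "(\<integral>\<omega>. (\<Sum>i\<in>{1..N \<omega>}. indicator UNIV (A i \<omega>)) \<partial>M) = (\<integral>\<omega>. real (N \<omega>) \<partial>M)"
    by (rule Bochner_Integration.integral_cong[OF refl]) simp
  also have "ennreal ((\<integral>\<omega>. real (N \<omega>) \<partial>M) / (\<integral>\<omega>. real (N \<omega>) \<partial>M)) = 1" using ENpos by simp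
  finally have prob: "prob_space \<mu>" by (intro prob_spaceI) (simp add: space_mu)
  have Gc: "- Collect nonneg_mat \<in> sets borel"
    using open_Compl[OF nonneg_closed] by (rule borel_open)
  have "emeasure \<mu> (- Collect nonneg_mat) = ennreal ((\<integral>\<omega>. (\<Sum>i\<in>{1..N \<omega>}. indicator (- Collect nonneg_mat) (A i \<omega>)) \<partial>M)
                                / (\<integral>\<omega>. real (N \<omega>) \<partial>M))"
    by (rule mu_def[OF Gc])
  also have "(\<integral>\<omega>. (\<Sum>i\<in>{1..N \<omega>}. indicator (- Collect nonneg_mat) (A i \<omega>) :: real) \<partial>M) = (\<integral>\<omega>. 0 \<partial>M)"
  proof (rule Bochner_Integration.integral_cong[OF refl])
    fix \<omega> assume w: "\<omega> \<in> space M"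
    have "indicator (- Collect nonneg_mat) (A i \<omega>) = (0::real)" for i using C1_G[OF w, of i] by simp
    then show "(\<Sum>i\<in>{1..N \<omega>}. indicator (- Collect nonneg_mat) (A i \<omega>) :: real) = 0" by simp
  qed
  finally have nn: "emeasure \<mu> (- Collect nonneg_mat) = 0" by simp
  interpret msetting \<mu>
    by (rule msetting.intro[OF prob mu_sets nn C2 I1])
  show ?thesis using final[OF rEA] .
qed

end
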